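(* If $r_{\min}<1$ and $\eta>\max\{\frac{r_{\min}}2,\frac{r_{\max}}n\}$, then the set $E_1=\{(x_1,\dots,x_n)\in[0,1]^n:\max_{i,j\in\mathcal V}|x_i-x_j|\ge1\}$ is finite-time robustly reachable from $[0,1]^n$ under control protocol (C1).
   Context: Fix $n\ge3$, $\mathcal V=\{1,\dots,n\}$, confidence thresholds $r_i\in(0,1]$, $r_{\min}=\min_ir_i$, $r_{\max}=\max_ir_i$, $\eta>0$. States $x(t)\in[0,1]^n$. Neighbor set $\mathcal N_i(t)=\{j:|x_j(t)-x_i(t)|\le r_i\}$ (contains $i$), $\Pi_{[0,1]}(y)=\min\{1,\max\{0,y\}\}$. Control protocol (C1): $x_i(t+1)=\Pi_{[0,1]}\big(|\mathcal N_i(t)|^{-1}\sum_{j\in\mathcal N_i(t)}x_j(t)+u_i(t)+b_i(t)\big)$, where $\delta_i(t)\in(0,\eta)$ is a chosen parameter, $u_i(t)\in[-\eta+\delta_i(t),\eta-\delta_i(t)]$ a chosen control input, $b_i(t)\in[-\delta_i(t),\delta_i(t)]$ an arbitrary uncertainty; $\delta_i(t),u_i(t)$ may depend on $x(0),\dots,x(t)$. A set $S\subseteq[0,1]^n$ is finite-time robustly reachable from $[0,1]^n$ under the protocol if there exist constants $T>0$ and $\varepsilon\in(0,\eta)$, independent of $x(0)$, such that for every $x(0)\in[0,1]^n$, either $x(0)\in S$, or one can choose $\delta_i(t)\in[\varepsilon,\eta)$ and $u_i(t)\in[-\eta+\delta_i(t),\eta-\delta_i(t)]$ for $i\in\mathcal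 V$, $0\le t<T$, guaranteeing that for arbitrary $b_i(t)\in[-\delta_i(t),\delta_i(t)]$ there is $t\in[1,T]$ with $x(t)\in S$. *)

theory Defs
  imports Complex_Main
begin

text \<open>Agents are indexed by V = {1..n}; a state is a function nat \<Rightarrow> real
  (only the values on {1..n} matter).\<close>

definition clip01 :: "real \<Rightarrow> real" where
  "clip01 y = min 1 (max 0 y)"

definition nbr :: "nat \<Rightarrow> (nat \<Rightarrow> real) \<Rightarrow> (nat \<Rightarrow> real) \<Rightarrow> nat \<Rightarrow> nat set" where
  "nbr n r x i = {j \<in> {1..n}. \<bar>x j - x i\<bar> \<le> r i}"

definition avg_nbr :: "nat \<Rightarrow> (nat \<Rightarrow> real) \<Rightarrow> (nat \<Rightarrow> real) \<Rightarrow> nat \<Rightarrow> real" where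
  "avg_nbr n r x i = (\<Sum>j\<in>nbr n r x i. x j) / real (card (nbr n r x i))"

text \<open>A controller strategy maps the history [x(0),...,x(t)] to the pair
  (delta(t), u(t)).  The uncertainty is b :: nat \<Rightarrow> nat \<Rightarrow> real, b t i = b_i(t).
  hist t is the list [x(0),...,x(t)] of the closed-loop trajectory under (C1).\<close>

fun hist :: "nat \<Rightarrow> (nat \<Rightarrow> real) \<Rightarrow>
    ((nat \<Rightarrow> real) list \<Rightarrow> (nat \<Rightarrow> real) \<times> (nat \<Rightarrow> real)) \<Rightarrow>
    (nat \<Rightarrow> nat \<Rightarrow> real) \<Rightarrow> (nat \<Rightarrow> real) \<Rightarrow> nat \<Rightarrow> (nat \<Rightarrow> real) list" where
  "hist n r \<sigma> b x0 0 = [x0]"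
| "hist n r \<sigma> b x0 (Suc t) =
     (let h = hist n r \<sigma> b x0 t; x = last h; u = snd (\<sigma> h) in
      h @ [(\<lambda>i. clip01 (avg_nbr n r x i + u i + b t i))])"

definition state :: "nat \<Rightarrow> (nat \<Rightarrow> real) \<Rightarrow>
    ((nat \<Rightarrow> real) list \<Rightarrow> (nat \<Rightarrow> real) \<times> (nat \<Rightarrow> real)) \<Rightarrow>
    (nat \<Rightarrow> nat \<Rightarrow> real) \<Rightarrow> (nat \<Rightarrow> real) \<Rightarrow> nat \<Rightarrow> (nat \<Rightarrow> real)" where
  "state n r \<sigma> b x0 t = last (hist n r \<sigma> b x0 t)"

definition in_cube :: "nat \<Rightarrow> (nat \<Rightarrow> real) \<Rightarrow> bool" where
  "in_cube n x \<longleftrightarrow> (\<forall>i\<in>{1..n}. 0 \<le> x i \<and> x i \<le> 1)"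

text \<open>The strategy must respect the constraints delta_i \<in> [eps, eta),
  u_i \<in> [-eta+delta_i, eta-delta_i] on every history (values on histories that
  are never realised are irrelevant, so this is no restriction).\<close>

definition robustly_reachable ::
  "nat \<Rightarrow> (nat \<Rightarrow> real) \<Rightarrow> real \<Rightarrow> (nat \<Rightarrow> real) set \<Rightarrow> bool" where
  "robustly_reachable n r \<eta> S \<longleftrightarrow>
     (\<exists>T::nat. T > 0 \<and> (\<exists>\<epsilon>::real. 0 < \<epsilon> \<and> \<epsilon> < \<eta> \<and>
       (\<forall>x0. in_cube n x0 \<longrightarrow> x0 \<in> S \<or>
         (\<exists>\<sigma>. (\<forall>h i. i \<in> {1..n} \<longrightarrow>
                    \<epsilon> \<le> fst (\<sigma> h) i \<and> fst (\<sigma> h) i < \<eta> \<and>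
                    \<bar>snd (\<sigma> h) i\<bar> \<le> \<eta> - fst (\<sigma> h) i) \<and>
               (\<forall>b. (\<forall>t<T. \<forall>i\<in>{1..n}.
                        \<bar>b t i\<bar> \<le> fst (\<sigma> (hist n r \<sigma> b x0 t)) i) \<longrightarrow>
                    (\<exists>t\<in>{1..T}. state n r \<sigma> b x0 t \<in> S))))))"

definition E1 :: "nat \<Rightarrow> (nat \<Rightarrow> real) set" where
  "E1 n = {x. in_cube n x \<and> (\<exists>i\<in>{1..n}. \<exists>j\<in>{1..n}. \<bar>x i - x j\<bar> \<ge> 1)}"

end

theory Submission
  imports Defs
begin

lemma hist_len: "length (hist n r \<sigma> b x0 t) = Suc t"
  by (induction t) (simp_all add: Let_def)

lemma state_Suc: "state n r \<sigma> b x0 (Suc t) =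
   (\<lambda>i. clip01 (avg_nbr n r (state n r \<sigma> b x0 t) i + snd (\<sigma> (hist n r \<sigma> b x0 t)) i + b t i))"
  by (simp add: state_def Let_def)

lemma state_0: "state n r \<sigma> b x0 0 = x0"
  by (simp add: state_def)

lemma clip_ge: "y \<ge> c \<Longrightarrow> c \<le> 1 \<Longrightarrow> clip01 y \<ge> c"
  by (simp add: clip01_def)
lemma clip_le: "y \<le> c \<Longrightarrow> 0 \<le> c \<Longrightarrow> clip01 y \<le> c"
  by (simp add: clip01_def)
lemma clip_01: "0 \<le> clip01 y \<and> clip01 y \<le> 1"
  by (simp add: clip01_def)

lemma avg_ge:
  assumes "i \<in> {1..n}" "0 \<le> r i" "\<forall>j\<in>nbr n r x i. c \<le> x j"
  shows "c \<le> avg_nbr n r x i"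
proof -
  have fin: "finite (nbr n r x i)" by (simp add: nbr_def)
  have iin: "i \<in> nbr n r x i" using assms by (simp add: nbr_def)
  hence cp: "real (card (nbr n r x i)) > 0" using fin card_gt_0_iff by fastforce
  have "(\<Sum>j\<in>nbr n r x i. c) \<le> (\<Sum>j\<in>nbr n r x i. x j)"
    using sum_mono[of "nbr n r x i" "\<lambda>_. c" x] assms(3) by simp
  hence "real (card (nbr n r x i)) * c \<le> (\<Sum>j\<in>nbr n r x i. x j)" by simp
  thus ?thesis unfolding avg_nbr_def using cp by (simp add: field_simps)
qed

lemma avg_le:
  assumes "i \<in> {1..n}" "0 \<le> r i" "\<forall>j\<in>nbr n r x i. x j \<le> c"
  shows "avg_nbr n r x i \<le> c"
proof -
  have fin: "finite (nbr n r x i)" by (simp add: nbr_def)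
  have iin: "i \<in> nbr n r x i" using assms by (simp add: nbr_def)
  hence cp: "real (card (nbr n r x i)) > 0" using fin card_gt_0_iff by fastforce
  have "(\<Sum>j\<in>nbr n r x i. x j) \<le> (\<Sum>j\<in>nbr n r x i. c)"
    using sum_mono[of "nbr n r x i" x "\<lambda>_. c"] assms(3) by simp
  hence "(\<Sum>j\<in>nbr n r x i. x j) \<le> real (card (nbr n r x i)) * c" by simp
  thus ?thesis unfolding avg_nbr_def using cp by (simp add: field_simps)
qed

lemma avg_single:
  assumes "k \<in> {1..n}" "0 \<le> r k" "\<forall>j\<in>{1..n}-{k}. \<bar>x j - x k\<bar> > r k"
  shows "avg_nbr n r x k = x k"
proof -
  have "nbr n r x k = {k}" using assms unfolding nbr_def by force
  thus ?thesis by (simp add: avg_nbr_def)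
qed

lemma avg_others:
  assumes "k \<in> {1..n}" "j \<in> {1..n}" "j \<noteq> k" "0 \<le> r j"
    "\<forall>l\<in>{1..n}-{k}. x l = 1" "x k \<le> 1"
  shows "1 - r j / real n \<le> avg_nbr n r x j"
proof (cases "k \<in> nbr n r x j")
  case False
  have "\<forall>l\<in>nbr n r x j. 1 - r j / real n \<le> x l"
  proof
    fix l assume "l \<in> nbr n r x j"
    hence "l \<in> {1..n} - {k}" using False by (auto simp: nbr_def)
    hence "x l = 1" using assms by blast
    moreover have "r j / real n \<ge> 0" using assms by simp
    ultimately show "1 - r j / real n \<le> x l" by simp
  qed
  thus ?thesis using avg_ge assms by blast
next
  case True
  have xj: "x j = 1" using assms by blast
  have d0: "1 - x k \<le> r j" using True xj by (auto simp add: nbr_def)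
  have N: "nbr n r x j = {1..n}"
  proof -
    have "\<bar>x l - x j\<bar> \<le> r j" if "l \<in> {1..n}" for l
    proof (cases "l = k")
      case True thus ?thesis using d0 xj assms(6) by simp
    next
      case False thus ?thesis using that assms(5) xj assms(4) by simp
    qed
    thus ?thesis unfolding nbr_def by auto
  qed
  have "(\<Sum>l\<in>{1..n}. x l) = x k + (\<Sum>l\<in>{1..n}-{k}. x l)"
    using assms(1) by (simp add: sum.remove)
  also have "(\<Sum>l\<in>{1..n}-{k}. x l) = (\<Sum>l\<in>{1..n}-{k}. 1)"
    using assms(5) by (intro sum.cong) auto
  also have "\<dots> = real n - 1" using assms(1) by simp
  finally have S: "(\<Sum>l\<in>{1..n}. x l) = x k + real n - 1" by simp
  have d: "1 - x k \<le> r j" using d0 by simp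
  have np: "real n > 0" using assms(1) by simp
  have "avg_nbr n r x j = (x k + real n - 1) / real n" unfolding avg_nbr_def N S by simp
  also have "\<dots> = 1 - (1 - x k) / real n" using np by (simp add: field_simps)
  also have "\<dots> \<ge> 1 - r j / real n" using d np by (simp add: divide_right_mono)
  finally show ?thesis .
qed


lemma max_aux: "(g::real) > 0 \<Longrightarrow> max 0 (max 0 a - g) \<le> max 0 (a - g)"
  by simp

theorem lemma3:
  fixes n :: nat and r :: "nat \<Rightarrow> real" and \<eta> :: real
  assumes "n \<ge> 3"
    and "\<forall>i\<in>{1..n}. 0 < r i \<and> r i \<le> 1"
    and "\<eta> > 0"
    and "Min (r ` {1..n}) < 1"
    and "\<eta> > max (Min (r ` {1..n}) / 2) (Max (r ` {1..n}) / real n)"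
  shows "robustly_reachable n r \<eta> (E1 n)"
proof -
  have fin: "finite (r ` {1..n})" and ne: "r ` {1..n} \<noteq> {}" using assms(1) by auto
  obtain k where k: "k \<in> {1..n}" "r k = Min (r ` {1..n})" using Min_in[OF fin ne] by auto
  define Rm where "Rm = Max (r ` {1..n})"
  have rle: "\<forall>j\<in>{1..n}. r j \<le> Rm" using fin by (auto simp: Rm_def)
  have rk1: "r k < 1" using k assms(4) by simp
  have rk0: "0 < r k" using k assms(2) by auto
  have h1: "\<eta> > r k / 2" and h2: "\<eta> > Rm / real n" using assms(5) k(2) unfolding Rm_def by (simp_all only: max_less_iff_conj)
  have np: "real n > 0" using assms(1) by simp
  define \<epsilon> where "\<epsilon> = min (r k / 2) (min ((\<eta> - r k / 2)/4) ((\<eta> - Rm/real n)/4))"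
  have e0: "\<epsilon> > 0" using rk0 h1 h2 by (simp add: \<epsilon>_def)
  have e1: "\<epsilon> \<le> r k / 2" "4*\<epsilon> \<le> \<eta> - r k / 2" "4*\<epsilon> \<le> \<eta> - Rm / real n"
  proof -
    have m3: "\<And>a b c::real. min a (min b c) \<le> a \<and> min a (min b c) \<le> b \<and> min a (min b c) \<le> c"
      by (simp add: min_le_iff_disj)
    note m = m3[of "r k / 2" "(\<eta> - r k / 2)/4" "(\<eta> - Rm/real n)/4", folded \<epsilon>_def]
    show "\<epsilon> \<le> r k / 2" using m by (simp add: field_simps)
    show "4*\<epsilon> \<le> \<eta> - r k / 2" using m by (simp add: field_simps)
    show "4*\<epsilon> \<le> \<eta> - Rm / real n" using m by (simp add: field_simps)
  qed
  have eeta: "\<epsilon> < \<eta>" using e1 rk0 e0 by linarith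
  define \<gamma> where "\<gamma> = \<eta> - 2*\<epsilon>"
  have g0: "\<gamma> > 0" using e1 rk0 e0 by (simp add: \<gamma>_def)
  define K where "K = nat \<lceil>1/\<gamma>\<rceil>"
  have Kg: "real K * \<gamma> \<ge> 1"
  proof -
    have "real K \<ge> 1/\<gamma>" unfolding K_def by linarith
    thus ?thesis using g0 by (simp add: field_simps)
  qed
  have K1: "K \<ge> 1"
  proof (rule ccontr)
    assume "\<not> K \<ge> 1" hence "K = 0" by simp
    thus False using Kg by simp
  qed
  define U where "U = (\<lambda>t i. if t < K then \<eta> - \<epsilon> else if t = K then -(r k/2)
      else if i = k then -(\<eta>-\<epsilon>) else \<eta> - \<epsilon>)"
  define \<sigma> where "\<sigma> = (\<lambda>h::(nat\<Rightarrow>real) list. ((\<lambda>i::nat. \<epsilon>), U (length h - 1)))"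
  have r0: "\<And>i. i\<in>{1..n} \<Longrightarrow> 0 \<le> r i" using assms(2) by force
  have cons: "\<forall>h i. i\<in>{1..n} \<longrightarrow> \<epsilon> \<le> fst (\<sigma> h) i \<and> fst (\<sigma> h) i < \<eta> \<and>
      \<bar>snd (\<sigma> h) i\<bar> \<le> \<eta> - fst (\<sigma> h) i"
    using e1 e0 eeta rk0 by (auto simp: \<sigma>_def U_def)
  have main: "\<forall>x0. in_cube n x0 \<longrightarrow> (\<forall>b. (\<forall>t<2*K+2. \<forall>i\<in>{1..n}.
      \<bar>b t i\<bar> \<le> fst (\<sigma> (hist n r \<sigma> b x0 t)) i) \<longrightarrow>
      (\<exists>t\<in>{1..2*K+2}. state n r \<sigma> b x0 t \<in> E1 n))"
  proof (intro allI impI)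
    fix x0 b
    assume cube: "in_cube n x0"
      and hb: "\<forall>t<2*K+2. \<forall>i\<in>{1..n}. \<bar>b t i\<bar> \<le> fst (\<sigma> (hist n r \<sigma> b x0 t)) i"
    define x where "x = state n r \<sigma> b x0"
    have rec: "\<And>t i. x (Suc t) i = clip01 (avg_nbr n r (x t) i + U t i + b t i)"
      by (simp add: x_def state_Suc \<sigma>_def hist_len)
    have bb: "\<And>t i. t < 2*K+2 \<Longrightarrow> i\<in>{1..n} \<Longrightarrow> \<bar>b t i\<bar> \<le> \<epsilon>"
      using hb by (simp add: \<sigma>_def)
    have x01: "\<And>t i. 0 \<le> x (Suc t) i \<and> x (Suc t) i \<le> 1" using rec clip_01 by simp
    have ph1: "\<And>t. t \<le> K \<Longrightarrow> \<forall>i\<in>{1..n}. min 1 (real t * \<gamma>) \<le> x t i"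
    proof -
      fix t show "t \<le> K \<Longrightarrow> \<forall>i\<in>{1..n}. min 1 (real t * \<gamma>) \<le> x t i"
      proof (induction t)
        case 0
        then show ?case using cube by (simp add: x_def state_0 in_cube_def)
      next
        case (Suc t)
        show ?case
        proof
          fix i assume i: "i \<in> {1..n}"
          have IH: "\<forall>j\<in>{1..n}. min 1 (real t * \<gamma>) \<le> x t j" using Suc by simp
          have "min 1 (real t * \<gamma>) \<le> avg_nbr n r (x t) i"
            using avg_ge[where n=n and r=r, OF i r0[OF i]] IH by (auto simp: nbr_def)
          moreover have "U t i = \<eta> - \<epsilon>" using Suc.prems by (simp add: U_def)
          moreover have "b t i \<ge> -\<epsilon>" using bb[of t i] i Suc.prems by auto
          ultimately have A: "avg_nbr n r (x t) i + U t i + b t i \<ge> min 1 (real t * \<gamma>) + \<gamma>"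
            by (simp add: \<gamma>_def)
          have B: "min 1 (real t * \<gamma>) + \<gamma> \<ge> min 1 (real (Suc t) * \<gamma>)"
            using g0 by (cases "real t * \<gamma> \<le> 1") (simp_all add: min_def algebra_simps)
          from A B have "avg_nbr n r (x t) i + U t i + b t i \<ge> min 1 (real (Suc t) * \<gamma>)"
            by linarith
          thus "min 1 (real (Suc t) * \<gamma>) \<le> x (Suc t) i"
            unfolding rec[of t i] by (rule clip_ge) simp
        qed
      qed
    qed
    have hK: "\<forall>i\<in>{1..n}. x K i = 1"
    proof
      fix i assume i: "i \<in> {1..n}"
      have "1 \<le> x K i" using ph1[of K] i Kg by simp
      moreover have "x K i \<le> 1" using x01[of "K-1" i] K1 by simp
      ultimately show "x K i = 1" by simp
    qed
    have hK1: "\<forall>i\<in>{1..n}. 1 - r k/2 - \<epsilon> \<le> x (Suc K) i \<and> x (Suc K) i \<le> 1 - r k/2 + \<epsilon>"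
    proof
      fix i assume i: "i \<in> {1..n}"
      have a: "avg_nbr n r (x K) i = 1"
        using avg_ge[where n=n and r=r, OF i r0[OF i], of "x K" 1] avg_le[where n=n and r=r, OF i r0[OF i], of "x K" 1] hK
        by (auto simp: nbr_def)
      have "\<bar>b K i\<bar> \<le> \<epsilon>" using bb i by simp
      moreover have "U K i = -(r k/2)" by (simp add: U_def)
      ultimately show "1 - r k/2 - \<epsilon> \<le> x (Suc K) i \<and> x (Suc K) i \<le> 1 - r k/2 + \<epsilon>"
        unfolding rec[of K i] a using e1 rk0 rk1 e0
        by (intro conjI clip_ge clip_le) (auto simp: abs_le_iff)
    qed
    define B where "B = 1 - r k/2 - \<eta> + 3*\<epsilon>"
    have B1: "B < 1 - r k" using e1 e0 by (simp add: B_def)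
    have B2: "B \<le> 1" using e1 e0 rk0 by (simp add: B_def)
    have ph3: "\<And>s. s \<le> K \<Longrightarrow> (\<forall>j\<in>{1..n}-{k}. x (K+2+s) j = 1) \<and>
        x (K+2+s) k \<le> max 0 (B - real s * \<gamma>)"
    proof -
      fix s show "s \<le> K \<Longrightarrow> (\<forall>j\<in>{1..n}-{k}. x (K+2+s) j = 1) \<and>
        x (K+2+s) k \<le> max 0 (B - real s * \<gamma>)"
      proof (induction s)
        case 0
        have A1: "\<forall>j\<in>{1..n}-{k}. x (K+2) j = 1"
        proof
          fix j assume j: "j \<in> {1..n}-{k}"
          hence ji: "j \<in> {1..n}" by simp
          have "1 - r k/2 - \<epsilon> \<le> avg_nbr n r (x (Suc K)) j"
            using avg_ge[where n=n and r=r, OF ji r0[OF ji]] hK1 by (auto simp: nbr_def)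
          moreover have "U (Suc K) j = \<eta> - \<epsilon>" using j by (simp add: U_def)
          moreover have "b (Suc K) j \<ge> -\<epsilon>" using bb[of "Suc K" j] ji by auto
          ultimately have "1 \<le> avg_nbr n r (x (Suc K)) j + U (Suc K) j + b (Suc K) j"
            using e1 e0 by linarith
          hence "1 \<le> x (Suc (Suc K)) j"
            unfolding rec[of "Suc K" j] by (intro clip_ge) auto
          thus "x (K+2) j = 1" using x01[of "Suc K" j] by simp
        qed
        have "avg_nbr n r (x (Suc K)) k \<le> 1 - r k/2 + \<epsilon>"
          using avg_le[where n=n and r=r, OF k(1) r0[OF k(1)]] hK1 by (auto simp: nbr_def)
        moreover have "U (Suc K) k = -(\<eta> - \<epsilon>)" by (simp add: U_def)
        moreover have "b (Suc K) k \<le> \<epsilon>" using bb[of "Suc K" k] k(1) by auto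
        ultimately have "x (Suc (Suc K)) k \<le> max 0 B"
          unfolding rec[of "Suc K" k] by (intro clip_le) (auto simp: B_def)
        then show ?case using A1 by simp
      next
        case (Suc s)
        define t where "t = K+2+s"
        have tS: "K+2+Suc s = Suc t" by (simp add: t_def)
        have tb: "t < 2*K+2" using Suc.prems by (simp add: t_def)
        have IH1: "\<forall>j\<in>{1..n}-{k}. x t j = 1" and IH2: "x t k \<le> max 0 (B - real s * \<gamma>)"
          using Suc by (simp_all add: t_def)
        have xt01: "\<And>i. 0 \<le> x t i \<and> x t i \<le> 1" using x01 by (simp add: t_def)
        have sg: "0 \<le> real s * \<gamma>" using g0 by simp
        have lt: "x t k < 1 - r k" using IH2 B1 rk1 sg by (simp add: max_def split: if_splits)
        have A1: "\<forall>j\<in>{1..n}-{k}. x (Suc t) j = 1"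
        proof
          fix j assume j: "j \<in> {1..n}-{k}"
          hence ji: "j \<in> {1..n}" and jk: "j \<noteq> k" by auto
          have "1 - r j / real n \<le> avg_nbr n r (x t) j"
            using avg_others[where n=n and r=r, OF k(1) ji jk r0[OF ji] IH1] xt01 by simp
          moreover have "r j / real n \<le> Rm / real n"
            using rle ji np by (simp add: divide_right_mono)
          moreover have "U t j = \<eta> - \<epsilon>" using jk by (simp add: U_def t_def)
          moreover have "b t j \<ge> -\<epsilon>" using bb[OF tb ji] by auto
          ultimately have "1 \<le> avg_nbr n r (x t) j + U t j + b t j"
            using e1 e0 by linarith
          hence "1 \<le> x (Suc (t)) j"
            unfolding rec[of t j] by (intro clip_ge) auto
          thus "x (Suc t) j = 1" using x01[of t j] by simp
        qed
        have "avg_nbr n r (x t) k = x t k"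
        proof (rule avg_single[where n=n and r=r, OF k(1) r0[OF k(1)]])
          show "\<forall>j\<in>{1..n} - {k}. r k < \<bar>x t j - x t k\<bar>" using IH1 lt by auto
        qed
        moreover have "U t k = -(\<eta> - \<epsilon>)" by (simp add: U_def t_def)
        moreover have "b t k \<le> \<epsilon>" using bb[OF tb k(1)] by auto
        ultimately have "x (Suc t) k \<le> max 0 (max 0 (B - real s * \<gamma>) - \<gamma>)"
          unfolding rec[of t k] using IH2 by (intro clip_le) (auto simp: \<gamma>_def)
        also have "\<dots> \<le> max 0 (B - real (Suc s) * \<gamma>)"
          using max_aux[OF g0, of "B - real s * \<gamma>"] by (simp add: algebra_simps)
        finally show ?case using A1 tS by simp
      qed
    qed
    have eqK: "K+2+K = 2*K+2" by simp
    have F: "x (2*K+2) k = 0"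
    proof -
      have "x (K+2+K) k \<le> max 0 (B - real K * \<gamma>)" using ph3[of K] by simp
      also have "\<dots> = 0" using B2 Kg by simp
      finally have "x (K+2+K) k \<le> 0" .
      hence "x (2*K+2) k \<le> 0" unfolding eqK .
      moreover have "0 \<le> x (2*K+2) k" using x01[of "2*K+1" k] by simp
      ultimately show ?thesis by simp
    qed
    define j0 where "j0 = (if k = 1 then 2 else 1::nat)"
    have j0: "j0 \<in> {1..n}-{k}" using assms(1) k(1) by (auto simp: j0_def)
    have G: "x (2*K+2) j0 = 1" using ph3[of K, unfolded eqK] j0 by simp
    have "x (2*K+2) \<in> E1 n"
      unfolding E1_def in_cube_def
    proof (intro CollectI conjI ballI bexI)
      fix i assume "i \<in> {1..n}"
      show "0 \<le> x (2*K+2) i" "x (2*K+2) i \<le> 1" using x01[of "2*K+1" i] by simp_all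
    next
      show "1 \<le> \<bar>x (2*K+2) j0 - x (2*K+2) k\<bar>" using F G by simp
    next
      show "j0 \<in> {1..n}" using j0 by simp
    next
      show "k \<in> {1..n}" using k(1) .
    qed
    thus "\<exists>t\<in>{1..2*K+2}. state n r \<sigma> b x0 t \<in> E1 n"
      by (intro bexI[of _ "2*K+2"]) (simp_all add: x_def)
  qed
  have T0: "(0::nat) < 2*K+2" by simp
  show ?thesis unfolding robustly_reachable_def
  proof (intro exI[of _ "2*K+2"] conjI[OF T0] exI[of _ \<epsilon>] conjI[OF e0] conjI[OF eeta] allI impI disjI2)
    fix x0 assume "in_cube n x0"
    thus "\<exists>\<sigma>. (\<forall>h i. i \<in> {1..n} \<longrightarrow> \<epsilon> \<le> fst (\<sigma> h) i \<and> fst (\<sigma> h) i < \<eta> \<and>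
                    \<bar>snd (\<sigma> h) i\<bar> \<le> \<eta> - fst (\<sigma> h) i) \<and>
               (\<forall>b. (\<forall>t<2*K+2. \<forall>i\<in>{1..n}.
                        \<bar>b t i\<bar> \<le> fst (\<sigma> (hist n r \<sigma> b x0 t)) i) \<longrightarrow>
                    (\<exists>t\<in>{1..2*K+2}. state n r \<sigma> b x0 t \<in> E1 n))"
      using main cons by (intro exI[of _ \<sigma>] conjI) blast+
  qed
qed

end
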